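(* Let $n\ge8$ be even and $F\colon\mathbb F_2^n\to\mathbb F_2^n$ a quadratic APN function. Then $F$ has a non-bent component function with amplitude less than $2^{3n/4}$.
   Context: $\langle\cdot,\cdot\rangle$ is the standard dot product; $F_b(x)=\langle b,F(x)\rangle$. $F$ is APN if for every $a\ne0$ and $c$, $F(x)+F(x+a)=c$ has at most 2 solutions; quadratic if each $F_b$ is a quadratic form plus an affine function. For quadratic $F$ and fixed $b$, $|W_F(b,a)|\in\{0,2^{(n+k)/2}\}$ for all $a$ for some $k$, where $W_F(b,a)=\sum_x(-1)^{F_b(x)+\langle x,a\rangle}$; $2^{(n+k)/2}$ is the amplitude of $F_b$; $F_b$ is bent if its amplitude is $2^{n/2}$. Components considered are non-trivial ($b\neq0$). *)

theory Defs
  imports "HOL-Analysis.Analysis" "HOL-Library.Z2"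
begin

text \<open>F_2 is the field type bit (HOL-Library.Z2); F_2^n is bit ^ 'n with n = CARD('n).\<close>

definition dotp :: "bit ^ 'n \<Rightarrow> bit ^ 'n \<Rightarrow> bit" where
  "dotp a x = (\<Sum>i\<in>UNIV. a $ i * x $ i)"

definition sgn_bit :: "bit \<Rightarrow> int" where
  "sgn_bit z = (if z = 0 then 1 else -1)"

definition component :: "(bit ^ 'n \<Rightarrow> bit ^ 'n) \<Rightarrow> bit ^ 'n \<Rightarrow> bit ^ 'n \<Rightarrow> bit" where
  "component F b x = dotp b (F x)"

definition walsh :: "(bit ^ 'n \<Rightarrow> bit ^ 'n) \<Rightarrow> bit ^ 'n \<Rightarrow> bit ^ 'n \<Rightarrow> int" where
  "walsh F b a = (\<Sum>x\<in>UNIV. sgn_bit (component F b x + dotp x a))"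

definition is_APN :: "(bit ^ 'n \<Rightarrow> bit ^ 'n) \<Rightarrow> bool" where
  "is_APN F \<longleftrightarrow> (\<forall>a c. a \<noteq> 0 \<longrightarrow> card {x. F x + F (x + a) = c} \<le> 2)"

definition is_quadratic :: "(bit ^ 'n \<Rightarrow> bit ^ 'n) \<Rightarrow> bool" where
  "is_quadratic F \<longleftrightarrow> (\<forall>b. \<exists>(q :: 'n \<Rightarrow> 'n \<Rightarrow> bit) (l :: 'n \<Rightarrow> bit) (e :: bit).
      \<forall>x. component F b x = (\<Sum>i\<in>UNIV. \<Sum>j\<in>UNIV. q i j * x $ i * x $ j)
                             + (\<Sum>i\<in>UNIV. l i * x $ i) + e)"

text \<open>Amplitude of F_b: the maximal absolute value of its Walsh coefficients
  (for quadratic F all nonzero ones share this value).\<close>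
definition amplitude :: "(bit ^ 'n \<Rightarrow> bit ^ 'n) \<Rightarrow> bit ^ 'n \<Rightarrow> int" where
  "amplitude F b = Max (range (\<lambda>a. \<bar>walsh F b a\<bar>))"

definition is_bent_component :: "(bit ^ 'n \<Rightarrow> bit ^ 'n) \<Rightarrow> bit ^ 'n \<Rightarrow> bool" where
  "is_bent_component F b \<longleftrightarrow> real_of_int (amplitude F b) = 2 powr (real CARD('n) / 2)"

end

theory Submission
  imports Defs
begin

declare add_bit_eq_xor[simp del] mult_bit_eq_and[simp del]
lemma UNIV_bit: "(UNIV :: bit set) = {0,1}" by (auto intro: bit.exhaust)
lemma card_bit: "CARD(bit) = 2" by (simp add: UNIV_bit)
lemma card_vecb: "CARD(bit^'n) = 2 ^ CARD('n)" by (simp add: card_bit)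
lemma fin_vecb[simp]: "finite (A :: (bit^'n) set)"
  by (metis card_vecb card.infinite finite_subset power_not_zero subset_UNIV zero_neq_numeral)

lemma bit_add_self[simp]: "(x::bit) + x = 0" by (cases x) auto
lemma vadd_self[simp]: "(x::bit^'n) + x = 0" by (simp add: vec_eq_iff)
lemma vadd_self2[simp]: "(x::bit^'n) + (x + y) = y" by (simp flip: add.assoc)
lemma vadd_self3[simp]: "(y::bit^'n) + x + x = y" by (simp add: add.assoc)
lemma vuminus[simp]: "-(x::bit^'n) = x" by (simp add: vec_eq_iff)
lemma vminus[simp]: "(x::bit^'n) - y = x + y" by (simp add: vec_eq_iff)
lemma vadd_eq_iff: "((x::bit^'n) + y = z) \<longleftrightarrow> (y = x + z)" by auto

lemma sgn_bit_0[simp]: "sgn_bit 0 = 1" by (simp add: sgn_bit_def)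
lemma sgn_bit_1[simp]: "sgn_bit 1 = -1" by (simp add: sgn_bit_def)
lemma sgn_bit_add: "sgn_bit (u + v) = sgn_bit u * sgn_bit v"
  by (cases u; cases v) auto
lemma sgn_bit_sq[simp]: "sgn_bit u * sgn_bit u = 1" by (cases u) auto

lemma dotp_add_right: "dotp a (x + y) = dotp a x + dotp a y"
  unfolding dotp_def by (simp add: distrib_left sum.distrib)
lemma dotp_comm: "dotp a x = dotp x a"
  unfolding dotp_def by (simp add: mult.commute)
lemma dotp_add_left: "dotp (a + b) x = dotp a x + dotp b x"
  by (metis dotp_add_right dotp_comm)
lemma dotp_0_right[simp]: "dotp a 0 = 0" unfolding dotp_def by simp
lemma dotp_0_left[simp]: "dotp 0 a = 0" unfolding dotp_def by simp
lemma dotp_axis: "dotp (axis i 1) x = x $ i"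
proof -
  have "\<And>j. (axis i 1) $ j * x $ j = (if j = i then x $ j else 0)" by (simp add: axis_def)
  then show ?thesis unfolding dotp_def by (simp add: sum.delta)
qed
lemma vec_eq_by_dotp: "(\<And>b. dotp b x = dotp b y) \<Longrightarrow> x = y"
  by (metis dotp_axis vec_eq_iff)

definition subgrp :: "(bit^'n) set \<Rightarrow> bool" where
  "subgrp G \<longleftrightarrow> 0 \<in> G \<and> (\<forall>x\<in>G. \<forall>y\<in>G. x + y \<in> G)"

lemma char_sum:
  assumes G: "subgrp G" and add: "\<And>x y. x\<in>G \<Longrightarrow> y\<in>G \<Longrightarrow> \<phi> (x+y) = \<phi> x + \<phi> y"
  shows "(\<Sum>x\<in>G. sgn_bit (\<phi> x)) = (if \<forall>x\<in>G. \<phi> x = 0 then int (card G) else 0)"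
proof (cases "\<forall>x\<in>G. \<phi> x = 0")
  case True then show ?thesis by simp
next
  case False
  then obtain x0 where x0: "x0 \<in> G" "\<phi> x0 = 1" by auto
  have bij: "bij_betw (\<lambda>x. x + x0) G G"
  proof (rule bij_betwI[where g="\<lambda>x. x + x0"])
    show "(\<lambda>x. x + x0) \<in> G \<rightarrow> G" using G x0 by (auto simp: subgrp_def)
  qed (use G x0 in \<open>auto simp: subgrp_def\<close>)
  have "(\<Sum>x\<in>G. sgn_bit (\<phi> x)) = (\<Sum>x\<in>G. sgn_bit (\<phi> (x + x0)))"
    using sum.reindex_bij_betw[OF bij, of "\<lambda>x. sgn_bit (\<phi> x)"] by simp
  also have "\<dots> = (\<Sum>x\<in>G. - sgn_bit (\<phi> x))"
    by (rule sum.cong) (auto simp: add x0 sgn_bit_add)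
  finally have eq0: "(\<Sum>x\<in>G. sgn_bit (\<phi> x)) = 0" by (simp add: sum_negf)
  show ?thesis unfolding if_not_P[OF False] using eq0 .
qed

lemma subgrp_UNIV[simp]: "subgrp UNIV" by (simp add: subgrp_def)

lemma char_UNIV: "(\<Sum>a\<in>(UNIV::(bit^'n) set). sgn_bit (dotp a z)) = (if z = 0 then 2 ^ CARD('n) else 0)"
proof -
  have "(\<forall>a::bit^'n. dotp a z = 0) \<longleftrightarrow> z = 0"
    using vec_eq_by_dotp[of z 0] by auto
  then show ?thesis
    using char_sum[OF subgrp_UNIV, of "\<lambda>a. dotp a z"] by (simp add: dotp_add_left card_bit)
qed

lemma bit_add_self2[simp]: "(x::bit) + (x + y) = y" by (simp flip: add.assoc)

definition LL :: "(bit^'n \<Rightarrow> bit^'n) \<Rightarrow> bit^'n \<Rightarrow> bit^'n \<Rightarrow> bit^'n" where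
  "LL F a x = F (x + a) + F x + F a + F 0"

lemma bilin_key:
  fixes q xi xj yi yj ai aj :: bit
  shows "q * (xi + yi + ai) * (xj + yj + aj) + q * (xi + yi) * (xj + yj) + q * ai * aj
       = q * (xi + ai) * (xj + aj) + q * xi * xj + q * (yi + ai) * (yj + aj) + q * yi * yj"
  by (cases q; cases xi; cases xj; cases yi; cases yj; cases ai; cases aj) simp_all

lemma lin_key:
  fixes l xi yi ai :: bit
  shows "l * (xi + yi + ai) + l * (xi + yi) + l * ai
       = l * (xi + ai) + l * xi + l * (yi + ai) + l * yi"
  by (cases l; cases xi; cases yi; cases ai) simp_all

lemma quad_third:
  fixes F :: "bit^'n \<Rightarrow> bit^'n"
  assumes "is_quadratic F"
  shows "component F b (x+y+a) + component F b (x+y) + component F b a + component F b 0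
       = component F b (x+a) + component F b x + component F b (y+a) + component F b y"
proof -
  obtain q l e where rep: "\<And>z. component F b z = (\<Sum>i\<in>(UNIV::'n set). \<Sum>j\<in>UNIV. q i j * z$i * z$j)
      + (\<Sum>i\<in>(UNIV::'n set). l i * z$i) + e"
    using assms unfolding is_quadratic_def by blast
  define Q where "Q z = (\<Sum>i\<in>(UNIV::'n set). \<Sum>j\<in>UNIV. q i j * z$i * z$j)" for z :: "bit^'n"
  define Lz where "Lz z = (\<Sum>i\<in>(UNIV::'n set). l i * z$i)" for z :: "bit^'n"
  have rep': "component F b z = Q z + Lz z + e" for z by (simp add: rep Q_def Lz_def)
  have hQ: "Q (x+y+a) + Q (x+y) + Q a + Q 0 = Q (x+a) + Q x + Q (y+a) + Q y"
  proof -
    have "Q (x+y+a) + Q (x+y) + Q a + Q 0 = (\<Sum>i\<in>UNIV. \<Sum>j\<in>UNIV. q i j * (x$i + y$i + a$i) * (x$j + y$j + a$j)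
        + q i j * (x$i + y$i) * (x$j + y$j) + q i j * a$i * a$j)"
      by (simp add: Q_def sum.distrib)
    also have "\<dots> = (\<Sum>i\<in>UNIV. \<Sum>j\<in>UNIV. q i j * (x$i + a$i) * (x$j + a$j) + q i j * x$i * x$j
        + q i j * (y$i + a$i) * (y$j + a$j) + q i j * y$i * y$j)"
      by (simp only: bilin_key)
    also have "\<dots> = Q (x+a) + Q x + Q (y+a) + Q y" by (simp add: Q_def sum.distrib)
    finally show ?thesis .
  qed
  have hL: "Lz (x+y+a) + Lz (x+y) + Lz a + Lz 0 = Lz (x+a) + Lz x + Lz (y+a) + Lz y"
  proof -
    have "Lz (x+y+a) + Lz (x+y) + Lz a + Lz 0 = (\<Sum>i\<in>UNIV. l i * (x$i + y$i + a$i)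
        + l i * (x$i + y$i) + l i * a$i)"
      by (simp add: Lz_def sum.distrib)
    also have "\<dots> = (\<Sum>i\<in>UNIV. l i * (x$i + a$i) + l i * x$i + l i * (y$i + a$i) + l i * y$i)"
      by (simp only: lin_key)
    also have "\<dots> = Lz (x+a) + Lz x + Lz (y+a) + Lz y" by (simp add: Lz_def sum.distrib)
    finally show ?thesis .
  qed
  have e1: "component F b (x+y+a) + component F b (x+y) + component F b a + component F b 0
     = (Q (x+y+a) + Q (x+y) + Q a + Q 0) + (Lz (x+y+a) + Lz (x+y) + Lz a + Lz 0) + ((e + e) + (e + e))"
    unfolding rep' by (simp only: ac_simps)
  have e2: "component F b (x+a) + component F b x + component F b (y+a) + component F b y
     = (Q (x+a) + Q x + Q (y+a) + Q y) + (Lz (x+a) + Lz x + Lz (y+a) + Lz y) + ((e + e) + (e + e))"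
    unfolding rep' by (simp only: ac_simps)
  show ?thesis unfolding e1 e2 hQ hL ..
qed

lemma LL_add:
  assumes "is_quadratic F"
  shows "LL F a (x + y) = LL F a x + LL F a y"
proof (rule vec_eq_by_dotp)
  fix b
  let ?c = "component F b"
  have 1: "dotp b (LL F a (x+y)) = ?c (x+y+a) + ?c (x+y) + ?c a + ?c 0"
    by (simp add: LL_def dotp_add_right component_def)
  have 2: "dotp b (LL F a x + LL F a y) = ?c (x+a) + ?c x + ?c (y+a) + ?c y"
    by (simp add: LL_def dotp_add_right component_def ac_simps)
  show "dotp b (LL F a (x + y)) = dotp b (LL F a x + LL F a y)"
    unfolding 1 2 quad_third[OF assms] by simp
qed

lemma LL_sym: "LL F a x = LL F x a"
  unfolding LL_def by (simp add: ac_simps)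

lemma LL_0[simp]: "LL F a 0 = 0"
  unfolding LL_def by (simp add: ac_simps)

lemma LL_add_left:
  assumes "is_quadratic F"
  shows "LL F (a + a') x = LL F a x + LL F a' x"
  using LL_add[OF assms, of x a a'] by (simp add: LL_sym)

lemma comp_shift: "component F b (x + d) = component F b x + dotp b (LL F d x) + component F b d + component F b 0"
  unfolding LL_def component_def dotp_add_right by (simp add: ac_simps)

definition Vb :: "(bit^'n \<Rightarrow> bit^'n) \<Rightarrow> bit^'n \<Rightarrow> (bit^'n) set" where
  "Vb F b = {a. \<forall>x. dotp b (LL F a x) = 0}"

lemma Vb_subgrp:
  assumes "is_quadratic F"
  shows "subgrp (Vb F b)"
  unfolding subgrp_def Vb_def
  by (auto simp: LL_add_left[OF assms] dotp_add_right LL_sym[of F 0])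

lemma Vb_0[simp]: "0 \<in> Vb F b"
  unfolding Vb_def by (simp add: LL_sym[of F 0])

lemma shift_sum: "(\<Sum>d\<in>UNIV. h (x + d)) = (\<Sum>y\<in>UNIV. h (y::bit^'n))"
proof -
  have "bij_betw (\<lambda>d. x + d) (UNIV::(bit^'n) set) UNIV"
    by (rule bij_betwI[where g="\<lambda>d. x + d"]) auto
  from sum.reindex_bij_betw[OF this, of h] show ?thesis by simp
qed

lemma walsh_sq:
  fixes F :: "bit^'n \<Rightarrow> bit^'n"
  assumes Q: "is_quadratic F"
  shows "(walsh F b a)^2 = 2^CARD('n) * (if \<forall>d\<in>Vb F b. component F b d + component F b 0 + dotp d a = 0
            then int (card (Vb F b)) else 0)"
proof -
  let ?f = "component F b"
  let ?g = "\<lambda>x. sgn_bit (?f x + dotp x a)"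
  let ?\<psi> = "\<lambda>d. ?f d + ?f 0 + dotp d a"
  let ?V = "Vb F b"
  have pt: "?g x * ?g (x + d) = sgn_bit (dotp b (LL F d x)) * sgn_bit (?\<psi> d)" for x d
  proof -
    have cs: "?f (x + d) = ?f x + dotp b (LL F d x) + ?f d + ?f 0" by (rule comp_shift)
    have "(?f x + dotp x a) + (?f (x+d) + dotp (x+d) a) = dotp b (LL F d x) + ?\<psi> d"
      by (simp only: cs dotp_add_left) (simp add: ac_simps)
    then show ?thesis by (metis sgn_bit_add)
  qed
  have inner: "(\<Sum>x\<in>UNIV. sgn_bit (dotp b (LL F d x))) = (if d \<in> ?V then 2^CARD('n) else 0)" for d
  proof -
    have "(\<forall>x. dotp b (LL F d x) = 0) \<longleftrightarrow> d \<in> ?V" by (simp add: Vb_def)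
    then show ?thesis
      using char_sum[OF subgrp_UNIV, of "\<lambda>x. dotp b (LL F d x)"]
      by (simp add: LL_add[OF Q] dotp_add_right card_bit)
  qed
  have psi_add: "?\<psi> (d + d') = ?\<psi> d + ?\<psi> d'" if "d \<in> ?V" "d' \<in> ?V" for d d'
  proof -
    have "dotp b (LL F d' d) = 0" "dotp b (LL F d d') = 0" using that by (simp_all add: Vb_def)
    then show ?thesis by (simp add: comp_shift dotp_add_left ac_simps)
  qed
  have "(walsh F b a)^2 = (\<Sum>x\<in>UNIV. ?g x) * (\<Sum>y\<in>UNIV. ?g y)"
    by (simp add: walsh_def power2_eq_square)
  also have "\<dots> = (\<Sum>x\<in>UNIV. \<Sum>y\<in>UNIV. ?g x * ?g y)" by (simp add: sum_product)
  also have "\<dots> = (\<Sum>x\<in>UNIV. \<Sum>d\<in>UNIV. ?g x * ?g (x + d))"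
    by (simp add: shift_sum[of "\<lambda>y. ?g _ * ?g y"])
  also have "\<dots> = (\<Sum>x\<in>UNIV. \<Sum>d\<in>UNIV. sgn_bit (dotp b (LL F d x)) * sgn_bit (?\<psi> d))"
    by (simp only: pt)
  also have "\<dots> = (\<Sum>d\<in>UNIV. (\<Sum>x\<in>UNIV. sgn_bit (dotp b (LL F d x))) * sgn_bit (?\<psi> d))"
    by (subst sum.swap) (simp add: sum_distrib_right)
  also have "\<dots> = (\<Sum>d\<in>UNIV. if d \<in> ?V then 2^CARD('n) * sgn_bit (?\<psi> d) else 0)"
    by (simp only: inner) (intro sum.cong refl; simp)
  also have "\<dots> = 2^CARD('n) * (\<Sum>d\<in>?V. sgn_bit (?\<psi> d))"
    by (subst sum.inter_restrict[symmetric]) (simp_all add: sum_distrib_left)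
  also have "\<dots> = 2^CARD('n) * (if \<forall>d\<in>?V. ?\<psi> d = 0 then int (card ?V) else 0)"
    using char_sum[OF Vb_subgrp[OF Q, of b], of ?\<psi>] psi_add by simp
  finally show ?thesis .
qed

lemma parseval:
  fixes F :: "bit^'n \<Rightarrow> bit^'n"
  shows "(\<Sum>a\<in>UNIV. (walsh F b a)^2) = 2^CARD('n) * 2^CARD('n)"
proof -
  let ?f = "component F b"
  have sq: "(walsh F b a)^2 = (\<Sum>x\<in>UNIV. \<Sum>y\<in>UNIV. sgn_bit (?f x + ?f y) * sgn_bit (dotp a (x + y)))" for a
  proof -
    have pt: "sgn_bit (?f x + dotp x a) * sgn_bit (?f y + dotp y a) = sgn_bit (?f x + ?f y) * sgn_bit (dotp a (x + y))" for x y
    proof -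
      have "(?f x + dotp x a) + (?f y + dotp y a) = (?f x + ?f y) + dotp a (x + y)"
        by (simp add: dotp_add_right dotp_comm[of x] dotp_comm[of y] ac_simps)
      then show ?thesis by (metis sgn_bit_add)
    qed
    show ?thesis by (simp add: walsh_def power2_eq_square sum_product pt)
  qed
  have "(\<Sum>a\<in>UNIV. (walsh F b a)^2) = (\<Sum>a\<in>UNIV. \<Sum>x\<in>UNIV. \<Sum>y\<in>UNIV. sgn_bit (?f x + ?f y) * sgn_bit (dotp a (x + y)))"
    by (simp only: sq)
  also have "\<dots> = (\<Sum>x\<in>UNIV. \<Sum>a\<in>UNIV. \<Sum>y\<in>UNIV. sgn_bit (?f x + ?f y) * sgn_bit (dotp a (x + y)))"
    by (rule sum.swap)
  also have "\<dots> = (\<Sum>x\<in>UNIV. \<Sum>y\<in>UNIV. sgn_bit (?f x + ?f y) * (\<Sum>a\<in>UNIV. sgn_bit (dotp a (x + y))))"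
    by (rule sum.cong[OF refl], subst sum.swap) (simp add: sum_distrib_left)
  also have "\<dots> = (\<Sum>x\<in>(UNIV::(bit^'n) set). \<Sum>y\<in>UNIV. if y = x then 2^CARD('n) else 0)"
  proof -
    have h: "sgn_bit (?f x + ?f y) * (\<Sum>a\<in>UNIV. sgn_bit (dotp a (x + y))) = (if y = x then 2^CARD('n) else 0)"
      for x y :: "bit^'n"
    proof -
      have "x + y = 0 \<longleftrightarrow> y = x" by (metis vadd_self vadd_self2 add_0_right)
      then show ?thesis by (auto simp: char_UNIV)
    qed
    show ?thesis by (simp only: h)
  qed
  also have "\<dots> = 2^CARD('n) * 2^CARD('n)" by (simp add: card_bit)
  finally show ?thesis .
qed

lemma amp_sq:
  fixes F :: "bit^'n \<Rightarrow> bit^'n"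
  assumes Q: "is_quadratic F"
  shows "(amplitude F b)^2 = 2^CARD('n) * int (card (Vb F b))" and "amplitude F b \<ge> 0"
proof -
  let ?W = "walsh F b"
  let ?S = "range (\<lambda>a. \<bar>?W a\<bar>)"
  let ?K = "2^CARD('n) * int (card (Vb F b)) :: int"
  have fin: "finite ?S" by simp
  have ne: "?S \<noteq> {}" by simp
  have "amplitude F b \<in> ?S" unfolding amplitude_def by (rule Max_in[OF fin ne])
  then obtain a0 where a0: "amplitude F b = \<bar>?W a0\<bar>" by blast
  have vals: "(?W a)^2 = 0 \<or> (?W a)^2 = ?K" for a
    using walsh_sq[OF Q, of b a] by (auto split: if_splits)
  have Kpos: "?K > 0"
  proof -
    have "Vb F b \<noteq> {}" using Vb_0[of F b] by blast
    then have "card (Vb F b) > 0" by (simp add: card_gt_0_iff)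
    then show ?thesis by simp
  qed
  have "\<exists>a1. (?W a1)^2 \<noteq> 0"
  proof (rule ccontr)
    assume "\<not> (\<exists>a1. (?W a1)^2 \<noteq> 0)"
    then have "\<forall>a. (?W a)^2 = 0" by blast
    then have "(\<Sum>a\<in>UNIV. (?W a)^2) = 0" by simp
    then show False using parseval[of F b] by simp
  qed
  then obtain a1 where a1: "(?W a1)^2 \<noteq> 0" by blast
  have "\<bar>?W a1\<bar> \<le> amplitude F b"
    unfolding amplitude_def by (rule Max_ge[OF fin]) simp
  then have "\<bar>?W a1\<bar>^2 \<le> (amplitude F b)^2"
    by (rule power_mono) simp
  then have ge: "?K \<le> (amplitude F b)^2" using vals[of a1] a1 by simp
  have "(amplitude F b)^2 = (?W a0)^2" using a0 by simp
  then show "(amplitude F b)^2 = ?K" using vals[of a0] ge Kpos by auto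
  show "amplitude F b \<ge> 0" using a0 by simp
qed

lemma vadd_eq0: "(p::bit^'n) + q = 0 \<longleftrightarrow> p = q"
  by (metis vadd_self vadd_self3 add_0_left)

lemma LL_ker:
  fixes F :: "bit^'n \<Rightarrow> bit^'n"
  assumes A: "is_APN F" and a: "a \<noteq> 0"
  shows "LL F a x = 0 \<longleftrightarrow> x = 0 \<or> x = a"
proof -
  let ?c = "F a + F 0"
  let ?S = "{x. F x + F (x + a) = ?c}"
  have cS: "card ?S \<le> 2" using A a unfolding is_APN_def by blast
  have sub: "{0, a} \<subseteq> ?S" by (simp add: add.commute)
  have c2: "card {0,a} = 2" using a by simp
  have eq: "{0,a} = ?S" by (rule card_seteq) (use cS c2 sub in auto)
  have "LL F a x = (F x + F (x + a)) + ?c" unfolding LL_def by (simp add: ac_simps)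
  then have "LL F a x = 0 \<longleftrightarrow> x \<in> ?S" by (simp add: vadd_eq0)
  then show ?thesis using eq by auto
qed

lemma LL_fiber:
  fixes F :: "bit^'n \<Rightarrow> bit^'n"
  assumes Q: "is_quadratic F" and A: "is_APN F" and a: "a \<noteq> 0"
  shows "LL F a y = LL F a x \<longleftrightarrow> y = x \<or> y = x + a"
proof -
  have "LL F a y = LL F a x \<longleftrightarrow> LL F a (x + y) = 0"
    using LL_add[OF Q, of a x y] vadd_eq0[of "LL F a x" "LL F a y"] by auto
  also have "\<dots> \<longleftrightarrow> x + y = 0 \<or> x + y = a" by (rule LL_ker[OF A a])
  also have "\<dots> \<longleftrightarrow> y = x \<or> y = x + a" by (metis vadd_eq0 vadd_eq_iff)
  finally show ?thesis .
qed

lemma range_card: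
  fixes F :: "bit^'n \<Rightarrow> bit^'n"
  assumes Q: "is_quadratic F" and A: "is_APN F" and a: "a \<noteq> 0"
  shows "card (range (LL F a)) * 2 = 2 ^ CARD('n)"
proof -
  let ?R = "range (LL F a)"
  let ?fib = "\<lambda>s. {x. LL F a x = s}"
  have U: "(UNIV :: (bit^'n) set) = (\<Union>s\<in>?R. ?fib s)" by auto
  have c2: "card (?fib s) = 2" if "s \<in> ?R" for s
  proof -
    from that obtain x0 where s: "s = LL F a x0" by auto
    have "?fib s = {x0, x0 + a}" using LL_fiber[OF Q A a, of _ x0] s by auto
    moreover have "x0 \<noteq> x0 + a" using a by (metis add_0_right add_left_cancel)
    ultimately show ?thesis by simp
  qed
  have "card (UNIV :: (bit^'n) set) = (\<Sum>s\<in>?R. card (?fib s))"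
    by (subst U, rule card_UN_disjoint) auto
  also have "\<dots> = (\<Sum>s\<in>?R. 2)" using c2 by simp
  finally show ?thesis by (simp add: card_bit)
qed

lemma ann_card:
  assumes S: "subgrp (S :: (bit^'n) set)"
  shows "card S * card {b. \<forall>s\<in>S. dotp b s = 0} = 2 ^ CARD('n)"
proof -
  let ?Ann = "{b::bit^'n. \<forall>s\<in>S. dotp b s = 0}"
  have "(\<Sum>b\<in>UNIV. \<Sum>s\<in>S. sgn_bit (dotp b s)) = (\<Sum>b\<in>UNIV. if b \<in> ?Ann then int (card S) else 0)"
  proof (rule sum.cong[OF refl])
    fix b :: "bit^'n"
    show "(\<Sum>s\<in>S. sgn_bit (dotp b s)) = (if b \<in> ?Ann then int (card S) else 0)"
      using char_sum[OF S, of "dotp b"] by (simp add: dotp_add_right)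
  qed
  also have "\<dots> = (\<Sum>b\<in>?Ann. int (card S))"
    by (subst sum.inter_restrict[symmetric]) simp_all
  also have "\<dots> = int (card S * card ?Ann)" by simp
  finally have 1: "(\<Sum>b\<in>UNIV. \<Sum>s\<in>S. sgn_bit (dotp b s)) = int (card S * card ?Ann)" .
  have "(\<Sum>b\<in>UNIV. \<Sum>s\<in>S. sgn_bit (dotp b s)) = (\<Sum>s\<in>S. \<Sum>b\<in>UNIV. sgn_bit (dotp b s))"
    by (rule sum.swap)
  also have "\<dots> = (\<Sum>s\<in>S. if s = 0 then 2 ^ CARD('n) else 0)"
    by (simp add: char_UNIV)
  also have "\<dots> = 2 ^ CARD('n)" using S by (simp add: sum.delta subgrp_def)
  finally have 2: "(\<Sum>b\<in>UNIV. \<Sum>s\<in>S. sgn_bit (dotp b s)) = 2 ^ CARD('n)" .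
  from 1 2 have "int (card S * card ?Ann) = int (2 ^ CARD('n))" by simp
  then show ?thesis by (simp only: of_nat_eq_iff)
qed

lemma partition_two:
  fixes F :: "bit^'n \<Rightarrow> bit^'n"
  assumes Q: "is_quadratic F" and A: "is_APN F" and a: "a \<noteq> 0"
  shows "card {b. a \<in> Vb F b} = 2"
proof -
  let ?S = "range (LL F a)"
  have S: "subgrp ?S" unfolding subgrp_def
    by (auto simp: LL_add[OF Q, symmetric]) (metis LL_0 rangeI)
  have eq: "{b. a \<in> Vb F b} = {b. \<forall>s\<in>?S. dotp b s = 0}" by (auto simp: Vb_def)
  have 1: "card ?S * card {b. \<forall>s\<in>?S. dotp b s = 0} = 2 ^ CARD('n)" by (rule ann_card[OF S])
  have 2: "card ?S * 2 = 2 ^ CARD('n)" by (rule range_card[OF Q A a])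
  have nz: "card ?S \<noteq> 0" using 2 by auto
  have "card ?S * card {b. \<forall>s\<in>?S. dotp b s = 0} = card ?S * 2" using 1 2 by linarith
  then show ?thesis unfolding eq using nz by simp
qed

lemma Vb_zero[simp]: "Vb F 0 = UNIV" by (simp add: Vb_def)

lemma unique_b:
  fixes F :: "bit^'n \<Rightarrow> bit^'n"
  assumes Q: "is_quadratic F" and A: "is_APN F" and a: "a \<noteq> 0"
  shows "\<exists>!b. b \<noteq> 0 \<and> a \<in> Vb F b"
proof -
  let ?T = "{b. a \<in> Vb F b}"
  have "card ?T = 2" by (rule partition_two[OF Q A a])
  then obtain u v where T: "?T = {u, v}" "u \<noteq> v" by (auto simp: card_2_iff)
  have "0 \<in> ?T" by simp
  then have "u = 0 \<or> v = 0" using T by auto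
  then obtain b where T0: "?T = {0, b}" and b0: "b \<noteq> 0" using T by auto
  show ?thesis
  proof (rule ex1I[of _ b])
    have "b \<in> ?T" using T0 by simp
    then show "b \<noteq> 0 \<and> a \<in> Vb F b" using b0 by simp
  next
    fix b' assume "b' \<noteq> 0 \<and> a \<in> Vb F b'"
    then have "b' \<in> ?T" "b' \<noteq> 0" by auto
    then show "b' = b" using T0 by auto
  qed
qed

lemma coset_eq:
  assumes P: "subgrp P" and p: "p \<in> P"
  shows "(+) (t + p) ` P = (+) t ` (P :: (bit^'n) set)"
proof (rule set_eqI, rule iffI)
  fix z assume "z \<in> (+) (t + p) ` P"
  then obtain p' where p': "p' \<in> P" "z = t + p + p'" by auto
  then have "z = t + (p + p')" "p + p' \<in> P" using P p by (auto simp: subgrp_def add.assoc)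
  then show "z \<in> (+) t ` P" by blast
next
  fix z assume "z \<in> (+) t ` P"
  then obtain p' where p': "p' \<in> P" "z = t + p'" by auto
  then have "z = (t + p) + (p + p')" "p + p' \<in> P" using P p by (auto simp: subgrp_def add.assoc)
  then show "z \<in> (+) (t + p) ` P" by blast
qed

lemma coset_self: "subgrp P \<Longrightarrow> y \<in> (+) y ` (P :: (bit^'n) set)"
  unfolding subgrp_def by (metis add_0_right image_eqI)

lemma parity_classes:
  assumes P: "subgrp (P :: (bit^'n) set)"
  shows "even (card T) \<longleftrightarrow> even (card {y\<in>T. odd (card (T \<inter> (+) y ` P))})"
proof (induction "card T" arbitrary: T rule: less_induct)
  case less
  show ?case
  proof (cases "T = {}")
    case True then show ?thesis by simp
  next
    case False
    then obtain y where y: "y \<in> T" by auto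
    define C where "C = T \<inter> (+) y ` P"
    define T' where "T' = T - C"
    have yC: "y \<in> C" using y coset_self[OF P] by (simp add: C_def)
    have CT: "C \<subseteq> T" by (simp add: C_def)
    have "T' \<subset> T" unfolding T'_def using yC CT by blast
    then have lt: "card T' < card T" by (simp add: psubset_card_mono)
    have IH: "even (card T') \<longleftrightarrow> even (card {z\<in>T'. odd (card (T' \<inter> (+) z ` P))})"
      using less lt by blast
    have inC: "T \<inter> (+) z ` P = C" if "z \<in> C" for z
    proof -
      from that obtain p where p: "p \<in> P" "z = y + p" by (auto simp: C_def)
      then show ?thesis using coset_eq[OF P p(1), of y] by (simp add: C_def)
    qed
    have inT': "T' \<inter> (+) z ` P = T \<inter> (+) z ` P" if z: "z \<in> T'" for z
    proof
      show "T' \<inter> (+) z ` P \<subseteq> T \<inter> (+) z ` P" by (auto simp: T'_def)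
      show "T \<inter> (+) z ` P \<subseteq> T' \<inter> (+) z ` P"
      proof
        fix w assume w: "w \<in> T \<inter> (+) z ` P"
        then obtain p2 where p2: "p2 \<in> P" "w = z + p2" by auto
        have "w \<notin> C"
        proof
          assume "w \<in> C"
          then obtain p1 where p1: "p1 \<in> P" "w = y + p1" by (auto simp: C_def)
          have "z = y + (p1 + p2)" using p1 p2 by (metis add.assoc vadd_self3)
          moreover have "p1 + p2 \<in> P" using P p1 p2 by (simp add: subgrp_def)
          ultimately have "z \<in> C" using z by (auto simp: T'_def C_def)
          then show False using z by (simp add: T'_def)
        qed
        then show "w \<in> T' \<inter> (+) z ` P" using w by (simp add: T'_def)
      qed
    qed
    define Od where "Od = {z\<in>T. odd (card (T \<inter> (+) z ` P))}"
    define Od' where "Od' = {z\<in>T'. odd (card (T' \<inter> (+) z ` P))}"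
    have split: "Od = (if odd (card C) then C else {}) \<union> Od'"
    proof (rule set_eqI)
      fix z
      show "z \<in> Od \<longleftrightarrow> z \<in> (if odd (card C) then C else {}) \<union> Od'"
      proof (cases "z \<in> C")
        case True
        then show ?thesis using inC[OF True] CT by (auto simp: Od_def Od'_def T'_def)
      next
        case False
        then show ?thesis using inT'[of z] by (auto simp: Od_def Od'_def T'_def)
      qed
    qed
    have disj: "(if odd (card C) then C else {}) \<inter> Od' = {}" by (auto simp: Od'_def T'_def)
    have cO: "card Od = (if odd (card C) then card C else 0) + card Od'"
      unfolding split using disj by (simp add: card_Un_disjoint)
    have cT: "card T = card C + card T'"
      using CT card_Un_disjoint[of C T'] by (simp add: T'_def Un_absorb1 Un_Diff_cancel)
    show ?thesis using IH cO cT unfolding Od_def[symmetric] Od'_def[symmetric]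
      by (cases "odd (card C)") auto
  qed
qed

lemma extend_grp:
  assumes W: "subgrp (W :: (bit^'n) set)" and v: "v \<notin> W"
  shows "subgrp (W \<union> (+) v ` W)" "card (W \<union> (+) v ` W) = 2 * card W" "W \<inter> (+) v ` W = {}"
proof -
  show disj: "W \<inter> (+) v ` W = {}"
  proof (rule ccontr)
    assume "W \<inter> (+) v ` W \<noteq> {}"
    then obtain w where "w \<in> W" "v + w \<in> W" by auto
    then have "(v + w) + w \<in> W" using W unfolding subgrp_def by blast
    then show False using v by simp
  qed
  have "card ((+) v ` W) = card W" by (rule card_image) (simp add: inj_on_def)
  then show "card (W \<union> (+) v ` W) = 2 * card W" using disj by (simp add: card_Un_disjoint)
  show "subgrp (W \<union> (+) v ` W)"
    unfolding subgrp_def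
  proof (intro conjI ballI)
    show "0 \<in> W \<union> (+) v ` W" using W by (simp add: subgrp_def)
  next
    fix x y assume x: "x \<in> W \<union> (+) v ` W" and y: "y \<in> W \<union> (+) v ` W"
    have cl: "\<And>a b. a \<in> W \<Longrightarrow> b \<in> W \<Longrightarrow> a + b \<in> W" using W by (simp add: subgrp_def)
    show "x + y \<in> W \<union> (+) v ` W"
    proof (cases "x \<in> W")
      case xW: True
      show ?thesis
      proof (cases "y \<in> W")
        case True then show ?thesis using xW cl by simp
      next
        case False
        then obtain w where "w \<in> W" "y = v + w" using y by auto
        then have "x + y = v + (x + w)" "x + w \<in> W" using xW cl by (auto simp: ac_simps)
        then show ?thesis by blast
      qed
    next
      case xW: False
      then obtain w where w: "w \<in> W" "x = v + w" using x by auto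
      show ?thesis
      proof (cases "y \<in> W")
        case True
        then have "x + y = v + (w + y)" "w + y \<in> W" using w cl by (auto simp: ac_simps)
        then show ?thesis by blast
      next
        case False
        then obtain w' where "w' \<in> W" "y = v + w'" using y by auto
        then have "x + y = w + w'" "w + w' \<in> W" using w cl by (auto simp: ac_simps)
        then show ?thesis by simp
      qed
    qed
  qed
qed

lemma greedy:
  assumes n: "CARD('n) = 2*m"
  shows "subgrp (W0::(bit^'n) set) \<Longrightarrow> card W0 = 2^j \<Longrightarrow> j \<le> m+1 \<Longrightarrow> W0 \<inter> B = {}
    \<Longrightarrow> card B + 2 \<le> 2^m \<Longrightarrow> \<exists>W. subgrp W \<and> W0 \<subseteq> W \<and> card W = 2^(m+1) \<and> W \<inter> B = {}"
proof (induction "m + 1 - j" arbitrary: W0 j)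
  case 0
  then have "j = m + 1" by simp
  then show ?case using 0 by blast
next
  case (Suc k)
  then have jm: "j \<le> m" by simp
  define Forb where "Forb = W0 \<union> (\<lambda>(\<beta>,w). \<beta> + w) ` (B \<times> W0)"
  have "card Forb \<le> card W0 + card ((\<lambda>(\<beta>,w). \<beta> + w) ` (B \<times> W0))"
    unfolding Forb_def by (rule card_Un_le)
  also have "\<dots> \<le> card W0 + card (B \<times> W0)"
    using card_image_le[of "B \<times> W0" "\<lambda>(\<beta>,w). \<beta> + w"] by simp
  also have "\<dots> = 2^j * (card B + 1)" using Suc.prems(2) by (simp add: card_cartesian_product algebra_simps)
  also have "\<dots> \<le> 2^m * (2^m - 1)"
    by (rule mult_le_mono) (use jm Suc.prems(5) in \<open>simp_all add: power_increasing\<close>)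
  also have "\<dots> < 2^m * 2^m" by simp
  also have "\<dots> = card (UNIV::(bit^'n) set)" by (simp add: card_bit n mult_2 power_add)
  finally have "card Forb < card (UNIV::(bit^'n) set)" .
  then obtain v where v: "v \<notin> Forb" by (metis UNIV_I less_irrefl subsetI subset_antisym)
  have vW: "v \<notin> W0" using v by (simp add: Forb_def)
  define W1 where "W1 = W0 \<union> (+) v ` W0"
  note ext = extend_grp[OF Suc.prems(1) vW]
  have W1: "subgrp W1" "card W1 = 2^(Suc j)" using ext Suc.prems(2) by (simp_all add: W1_def)
  have W1B: "W1 \<inter> B = {}"
  proof (rule ccontr)
    assume "W1 \<inter> B \<noteq> {}"
    then obtain z where z: "z \<in> W1" "z \<in> B" by auto
    show False
    proof (cases "z \<in> W0")
      case True then show False using z Suc.prems(4) by auto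
    next
      case False
      then obtain w where w: "w \<in> W0" "z = v + w" using z by (auto simp: W1_def)
      then have "v = z + w" by simp
      then have "v \<in> Forb" using z w unfolding Forb_def by blast
      then show False using v by simp
    qed
  qed
  have "k = m + 1 - Suc j" using Suc.hyps(2) by simp
  from Suc.hyps(1)[OF this W1 _ W1B Suc.prems(5)] jm
  obtain W where "subgrp W" "W1 \<subseteq> W" "card W = 2^(m+1)" "W \<inter> B = {}" by auto
  then show ?case by (auto simp: W1_def)
qed

context
  fixes Y :: "(bit^'n) set" and m :: nat
  assumes n: "CARD('n) = 2*m" and m3: "3 \<le> m"
    and EV: "\<And>E j. subgrp E \<Longrightarrow> card E = 2^j \<Longrightarrow> m+1 \<le> j \<Longrightarrow> even (card (Y \<inter> E))"
    and cY: "card Y = 2 \<or> card Y = 2^m + 2"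
begin

lemma EVaff:
  assumes W: "subgrp W" and cW: "card W = 2^(m+1)"
  shows "even (card (Y \<inter> (+) t ` W))"
proof (cases "t \<in> W")
  case True
  have "(+) t ` W = W" using coset_eq[OF W True, of 0] by simp
  then show ?thesis using EV[OF W cW] by simp
next
  case False
  note ext = extend_grp[OF W False]
  have c2: "card (W \<union> (+) t ` W) = 2^(m+2)" using ext(2) cW by simp
  have e1: "even (card (Y \<inter> (W \<union> (+) t ` W)))" by (rule EV[OF ext(1) c2]) simp
  have e2: "even (card (Y \<inter> W))" by (rule EV[OF W cW]) simp
  have "Y \<inter> (W \<union> (+) t ` W) = (Y \<inter> W) \<union> (Y \<inter> (+) t ` W)" by auto
  moreover have "(Y \<inter> W) \<inter> (Y \<inter> (+) t ` W) = {}" using ext(3) by auto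
  ultimately have "card (Y \<inter> (W \<union> (+) t ` W)) = card (Y \<inter> W) + card (Y \<inter> (+) t ` W)"
    by (simp add: card_Un_disjoint)
  then show ?thesis using e1 e2 by simp
qed

lemma hyper:
  assumes c: "c \<noteq> 0" and inv: "\<forall>y\<in>Y. y + c \<in> Y"
  shows False
proof -
  obtain i where ci: "c $ i = 1" using c by (metis bit_not_zero_iff vec_eq_iff zero_index)
  define w where "w = axis i (1::bit)"
  have wc: "dotp w c = 1" by (simp add: w_def dotp_axis ci)
  define H where "H = {x. dotp w x = 0}"
  have H: "subgrp H" by (simp add: subgrp_def H_def dotp_add_right)
  have bij1: "bij_betw (\<lambda>x. x + c) H (-H)"
    by (rule bij_betwI[where g="\<lambda>x. x + c"]) (auto simp: H_def dotp_add_right wc)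
  have "card H = card (-H)" using bij_betw_same_card[OF bij1] .
  moreover have "card H + card (-H) = card (UNIV :: (bit^'n) set)"
  proof -
    have "H \<union> -H = UNIV" by blast
    then show ?thesis using card_Un_disjoint[of H "-H"] by simp
  qed
  ultimately have "2 * card H = 2^(2*m)" by (simp add: card_bit n)
  moreover have "(2::nat)^(2*m) = 2 * 2^(2*m-1)"
  proof -
    have "2*m = Suc (2*m-1)" using m3 by simp
    then show ?thesis by (metis power_Suc)
  qed
  ultimately have cH: "card H = 2^(2*m-1)" by simp
  have eH: "even (card (Y \<inter> H))" by (rule EV[OF H cH]) (use m3 in simp)
  have bij2: "bij_betw (\<lambda>y. y + c) (Y \<inter> H) (Y - H)"
    by (rule bij_betwI[where g="\<lambda>x. x + c"]) (auto simp: H_def dotp_add_right wc inv)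
  have d: "(Y \<inter> H) \<inter> (Y - H) = {}" by blast
  have u: "(Y \<inter> H) \<union> (Y - H) = Y" by blast
  have "card Y = card (Y \<inter> H) + card (Y - H)"
    using card_Un_disjoint[of "Y \<inter> H" "Y - H"] d u by simp
  also have "\<dots> = 2 * card (Y \<inter> H)" using bij_betw_same_card[OF bij2] by simp
  finally have cYH: "card Y = 2 * card (Y \<inter> H)" .
  from eH obtain k where k: "card (Y \<inter> H) = 2 * k" by blast
  have m2: "(2::nat)^m = 4 * 2^(m-2)"
  proof -
    have "m = Suc (Suc (m-2))" using m3 by simp
    then have "(2::nat)^m = 2 * (2 * 2^(m-2))" by (metis power_Suc)
    then show ?thesis by simp
  qed
  define t where "t = (2::nat)^(m-2)"
  have c4: "card Y = 4 * k" using cYH k by simp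
  from cY have "card Y = 2 \<or> card Y = 4 * t + 2" using m2 by (simp add: t_def)
  then show False using c4 by presburger
qed

lemma oddflat:
  assumes P: "subgrp P" and cP: "card P = 2^p" and pm: "p \<le> m+1" and t: "t \<in> Y"
    and todd: "odd (card (Y \<inter> (+) t ` P))"
    and small: "card {y\<in>Y. odd (card (Y \<inter> (+) y ` P))} + 1 \<le> 2^m"
  shows False
proof -
  define Yo where "Yo = {y\<in>Y. odd (card (Y \<inter> (+) y ` P))}"
  define B where "B = (\<lambda>y. y + t) ` {y\<in>Y. odd (card (Y \<inter> (+) y ` P)) \<and> y + t \<notin> P}"
  have tYo: "t \<in> Yo" using t todd by (simp add: Yo_def)
  have sub: "{y\<in>Y. odd (card (Y \<inter> (+) y ` P)) \<and> y + t \<notin> P} \<subseteq> Yo - {t}"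
    using P by (auto simp: Yo_def subgrp_def)
  have "card B \<le> card {y\<in>Y. odd (card (Y \<inter> (+) y ` P)) \<and> y + t \<notin> P}"
    unfolding B_def by (rule card_image_le) simp
  also have "\<dots> \<le> card (Yo - {t})" by (rule card_mono[OF _ sub]) simp
  also have "\<dots> = card Yo - 1" using tYo by simp
  moreover have "card Yo > 0" using tYo by (auto simp: card_gt_0_iff)
  ultimately have cB: "card B + 2 \<le> 2^m" using small unfolding Yo_def[symmetric] by linarith
  have PB: "P \<inter> B = {}" by (auto simp: B_def)
  obtain W where W: "subgrp W" "P \<subseteq> W" "card W = 2^(m+1)" "W \<inter> B = {}"
    using greedy[OF n P cP pm PB cB] by blast
  define T where "T = Y \<inter> (+) t ` W"
  have eT: "even (card T)" unfolding T_def by (rule EVaff[OF W(1) W(3)])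
  have yPW: "(+) y ` P \<subseteq> (+) t ` W" if "y \<in> T" for y
  proof
    fix z assume "z \<in> (+) y ` P"
    then obtain p where p: "p \<in> P" "z = y + p" by auto
    from that obtain w where w: "w \<in> W" "y = t + w" by (auto simp: T_def)
    have "z = t + (w + p)" using p w by (simp add: add.assoc)
    moreover have "w + p \<in> W" using W(1,2) w p by (auto simp: subgrp_def)
    ultimately show "z \<in> (+) t ` W" by blast
  qed
  have TyP: "T \<inter> (+) y ` P = Y \<inter> (+) y ` P" if "y \<in> T" for y
    using yPW[OF that] by (auto simp: T_def)
  have key: "{y\<in>T. odd (card (T \<inter> (+) y ` P))} = Y \<inter> (+) t ` P"
  proof (rule set_eqI, rule iffI)
    fix y assume "y \<in> {y\<in>T. odd (card (T \<inter> (+) y ` P))}"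
    then have yT: "y \<in> T" and yo: "odd (card (Y \<inter> (+) y ` P))" using TyP by auto
    from yT obtain w where w: "w \<in> W" "y = t + w" and yY: "y \<in> Y" by (auto simp: T_def)
    have "y + t = w" using w by (simp add: add.commute)
    have "y + t \<in> P"
    proof (rule ccontr)
      assume "y + t \<notin> P"
      then have "y + t \<in> B" using yY yo by (auto simp: B_def)
      then show False using W(4) w \<open>y + t = w\<close> by auto
    qed
    then have "y = t + (y + t)" "y + t \<in> P" by (simp_all add: add.commute)
    then show "y \<in> Y \<inter> (+) t ` P" using yY by blast
  next
    fix y assume y: "y \<in> Y \<inter> (+) t ` P"
    then obtain p where p: "p \<in> P" "y = t + p" by auto
    then have yT: "y \<in> T" using y W(2) by (auto simp: T_def)
    have "(+) y ` P = (+) t ` P" using coset_eq[OF P p(1), of t] p by simp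
    then show "y \<in> {y\<in>T. odd (card (T \<inter> (+) y ` P))}" using yT TyP[OF yT] todd by simp
  qed
  have "even (card T) \<longleftrightarrow> even (card (Y \<inter> (+) t ` P))"
    using parity_classes[OF P, of T] key by simp
  then show False using eT todd by simp
qed

lemma Zc:
  assumes c: "c \<noteq> 0"
  shows "card {y\<in>Y. y + c \<in> Y} \<le> 2"
proof (rule ccontr)
  assume big: "\<not> ?thesis"
  define Z where "Z = {y\<in>Y. y + c \<in> Y}"
  define P where "P = {0, c}"
  have P: "subgrp P" by (auto simp: P_def subgrp_def)
  have cP: "card P = 2^1" using c by (simp add: P_def)
  have yP: "(+) y ` P = {y, y + c}" for y by (simp add: P_def)
  have yc: "y \<noteq> y + c" for y using c by (metis add_0_right add_left_cancel)
  have "even (card Z)"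
  proof -
    have E: "{y\<in>Z. odd (card (Z \<inter> (+) y ` P))} = {}"
    proof -
      have "Z \<inter> (+) y ` P = {y, y + c}" if "y \<in> Z" for y
        using that by (auto simp: Z_def yP add.assoc)
      then show ?thesis using yc by auto
    qed
    have "even (card Z) \<longleftrightarrow> even (card {y\<in>Z. odd (card (Z \<inter> (+) y ` P))})"
      by (rule parity_classes[OF P])
    then show ?thesis unfolding E by simp
  qed
  have ZY: "Z \<subseteq> Y" by (auto simp: Z_def)
  show False
  proof (cases "Z = Y")
    case True
    then have "\<forall>y\<in>Y. y + c \<in> Y" by (auto simp: Z_def)
    then show False using hyper[OF c] by blast
  next
    case False
    then obtain t where t: "t \<in> Y" "t \<notin> Z" using ZY by blast
    have c4: "4 \<le> card Z" using big \<open>even (card Z)\<close> unfolding Z_def[symmetric] by presburger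
    have "card Z \<le> card Y" by (rule card_mono[OF _ ZY]) simp
    then have cY': "card Y = 2^m + 2" using cY c4 by auto
    have Yo: "{y\<in>Y. odd (card (Y \<inter> (+) y ` P))} = Y - Z"
    proof -
      have "Y \<inter> (+) y ` P = (if y + c \<in> Y then {y, y+c} else {y})" if "y \<in> Y" for y
        using that by (auto simp: yP)
      then show ?thesis using yc by (auto simp: Z_def)
    qed
    have cd: "card (Y - Z) = card Y - card Z" using ZY by (simp add: card_Diff_subset)
    have small: "card {y\<in>Y. odd (card (Y \<inter> (+) y ` P))} + 1 \<le> 2^m"
      unfolding Yo cd using cY' c4 one_le_power[of "2::nat" m] by linarith
    have "Y \<inter> (+) t ` P = {t}" using t by (auto simp: yP Z_def)
    then have "odd (card (Y \<inter> (+) t ` P))" by simp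
    then show False using oddflat[OF P cP _ t(1) _ small] m3 by simp
  qed
qed

lemma sidon:
  assumes "y1 \<in> Y" "y2 \<in> Y" "y3 \<in> Y" "y4 \<in> Y" "y1 \<noteq> y2" "y3 \<noteq> y4" "y1 + y2 = y3 + y4"
  shows "y3 = y1 \<or> y3 = y2"
proof (rule ccontr)
  assume nt: "\<not> ?thesis"
  define c where "c = y1 + y2"
  have c: "c \<noteq> 0" using assms(5) by (simp add: c_def vadd_eq0)
  have "y1 + c = y2" unfolding c_def by simp
  moreover have "y2 + c = y1" unfolding c_def by (simp add: add.left_commute)
  moreover have "y3 + c = y4" unfolding c_def assms(7) by simp
  ultimately have "{y1, y2, y3} \<subseteq> {y\<in>Y. y + c \<in> Y}" using assms by auto
  then have "card {y1, y2, y3} \<le> card {y\<in>Y. y + c \<in> Y}" by (rule card_mono[rotated]) simp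
  also have "\<dots> \<le> 2" by (rule Zc[OF c])
  finally show False using nt assms(5) by (auto simp: card_insert_if)
qed

lemma two_pt:
  assumes Y: "u \<in> Y" "v \<in> Y" "u' \<in> Y" "v' \<in> Y" and uv: "u \<noteq> v" "u' \<noteq> v'"
    and dis: "u' \<noteq> u" "u' \<noteq> v" "v' \<noteq> u" "v' \<noteq> v"
  shows "Y \<inter> (+) u ` {0, u+v, u'+v', (u+v)+(u'+v')} = {u, v}"
proof -
  define d where "d = u' + v'"
  have d0: "d \<noteq> 0" using uv(2) by (simp add: d_def vadd_eq0)
  have img: "(+) u ` {0, u+v, d, (u+v)+d} = {u, v, u + d, v + d}" by (simp add: add.assoc)
  have gen: "w + d \<notin> Y" if w: "w \<in> Y" "w \<noteq> u'" "w \<noteq> v'" for w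
  proof
    assume wd: "w + d \<in> Y"
    have "w \<noteq> w + d" using d0 by (metis add_0_right add_left_cancel)
    moreover have "w + (w + d) = u' + v'" by (simp add: d_def)
    ultimately have "u' = w \<or> u' = w + d" using sidon[OF w(1) wd Y(3) Y(4) _ uv(2)] by blast
    then show False
    proof
      assume "u' = w" then show False using w by simp
    next
      assume "u' = w + d"
      then have "u' + d = w" by simp
      then have "v' = w" by (simp add: d_def)
      then show False using w by simp
    qed
  qed
  have "u + d \<notin> Y" using gen[OF Y(1)] dis by auto
  moreover have "v + d \<notin> Y" using gen[OF Y(2)] dis by auto
  ultimately show ?thesis using img Y(1,2) unfolding d_def by auto
qed

lemma core_false: False
proof (cases "card Y = 2")
  case True
  then obtain y1 y2 where Y2: "Y = {y1, y2}" "y1 \<noteq> y2" by (auto simp: card_2_iff)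
  define c where "c = y1 + y2"
  have c: "c \<noteq> 0" using Y2 by (simp add: c_def vadd_eq0)
  have "\<forall>y\<in>Y. y + c \<in> Y" using Y2 by (auto simp: c_def add.left_commute)
  then show False using hyper[OF c] by blast
next
  case False
  then have cY': "card Y = 2^m + 2" using cY by simp
  have "(2::nat)^3 \<le> 2^m" using m3 by (rule power_increasing) simp
  then have c10: "10 \<le> card Y" using cY' by simp
  have ex_out: "\<exists>y\<in>Y. y \<notin> S" if "card S < card Y" for S
  proof (rule ccontr)
    assume "\<not> ?thesis"
    then have "Y \<subseteq> S" by blast
    then have "card Y \<le> card S" by (rule card_mono[rotated]) simp
    then show False using that by simp
  qed
  obtain y1 where y1: "y1 \<in> Y" using ex_out[of "{}"] c10 by auto
  obtain y2 where y2: "y2 \<in> Y" "y2 \<notin> {y1}" using ex_out[of "{y1}"] c10 by auto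
  have "card {y1, y2} \<le> 2" using card_length[of "[y1,y2]"] by simp
  then obtain y3 where y3: "y3 \<in> Y" "y3 \<notin> {y1, y2}" using ex_out[of "{y1,y2}"] c10 by auto
  have "card {y1, y2, y3} \<le> 3" using card_length[of "[y1,y2,y3]"] by simp
  then obtain y4 where y4: "y4 \<in> Y" "y4 \<notin> {y1, y2, y3}" using ex_out[of "{y1,y2,y3}"] c10 by auto
  define d1 where "d1 = y1 + y2"
  define d2 where "d2 = y3 + y4"
  have d1: "d1 \<noteq> 0" using y2 by (simp add: d1_def vadd_eq0)
  have d2: "d2 \<noteq> 0" using y4 by (auto simp: d2_def vadd_eq0)
  have d12: "d1 \<noteq> d2"
  proof
    assume "d1 = d2"
    then have "y3 = y1 \<or> y3 = y2" using sidon[OF y1 y2(1) y3(1) y4(1)] y2 y4 by (auto simp: d1_def d2_def)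
    then show False using y3 by auto
  qed
  define P where "P = {0, d1, d2, d1 + d2}"
  have P: "subgrp P" unfolding subgrp_def P_def by (auto simp: ac_simps)
  have ne: "d1 + d2 \<noteq> 0" "d1 + d2 \<noteq> d1" "d1 + d2 \<noteq> d2" "d1 \<noteq> d1 + d2" "d2 \<noteq> d1 + d2"
    using d1 d2 d12 by (auto simp: vadd_eq0)
  have cP: "card P = 2^2" unfolding P_def using d1 d2 d12 ne by auto
  have cls: "card (Y \<inter> (+) y ` P) = 2" if "y \<in> {y1, y2, y3, y4}" for y
  proof -
    have dis: "y1 \<noteq> y2" "y1 \<noteq> y3" "y1 \<noteq> y4" "y2 \<noteq> y3" "y2 \<noteq> y4" "y3 \<noteq> y4" using y2 y3 y4 by auto
    have P1: "P = {0, y1+y2, y3+y4, (y1+y2)+(y3+y4)}" by (simp add: P_def d1_def d2_def)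
    have P2: "P = {0, y2+y1, y3+y4, (y2+y1)+(y3+y4)}" by (simp add: P_def d1_def d2_def add.commute)
    have P3: "P = {0, y3+y4, y1+y2, (y3+y4)+(y1+y2)}" by (auto simp: P_def d1_def d2_def add.commute)
    have P4: "P = {0, y4+y3, y1+y2, (y4+y3)+(y1+y2)}" by (auto simp: P_def d1_def d2_def add.commute)
    from that show ?thesis
    proof (elim insertE)
      assume "y = y1" then show ?thesis
        using two_pt[OF y1 y2(1) y3(1) y4(1)] dis unfolding P1 by auto
    next
      assume "y = y2" then show ?thesis
        using two_pt[OF y2(1) y1 y3(1) y4(1)] dis unfolding P2 by auto
    next
      assume "y = y3" then show ?thesis
        using two_pt[OF y3(1) y4(1) y1 y2(1)] dis unfolding P3 by auto
    next
      assume "y = y4" then show ?thesis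
        using two_pt[OF y4(1) y3(1) y1 y2(1)] dis unfolding P4 by auto
    qed simp
  qed
  define Yo where "Yo = {y\<in>Y. odd (card (Y \<inter> (+) y ` P))}"
  have YoS: "Yo \<subseteq> Y - {y1, y2, y3, y4}" using cls by (auto simp: Yo_def)
  have c4: "card {y1, y2, y3, y4} = 4" using y2 y3 y4 by auto
  have "card Yo \<le> card (Y - {y1, y2, y3, y4})" by (rule card_mono[OF _ YoS]) simp
  also have "\<dots> = card Y - 4" using y1 y2 y3 y4 c4 by (simp add: card_Diff_subset)
  finally have small: "card Yo + 1 \<le> 2^m" using cY' c10 by linarith
  have "Yo \<noteq> {}"
  proof
    assume Yo0: "Yo = {}"
    define Z where "Z = (\<lambda>c. {y\<in>Y. y + c \<in> Y})"
    have "Y \<subseteq> Z d1 \<union> Z d2 \<union> Z (d1 + d2)"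
    proof
      fix y assume y: "y \<in> Y"
      have ev: "even (card (Y \<inter> (+) y ` P))" using Yo0 y by (auto simp: Yo_def)
      have yin: "y \<in> Y \<inter> (+) y ` P" using y coset_self[OF P] by simp
      have "\<exists>z\<in>Y \<inter> (+) y ` P. z \<noteq> y"
      proof (rule ccontr)
        assume "\<not> ?thesis"
        then have "Y \<inter> (+) y ` P = {y}" using yin by auto
        then show False using ev by simp
      qed
      then obtain p where p: "p \<in> P" "y + p \<in> Y" "y + p \<noteq> y" by auto
      then have "p \<noteq> 0" by auto
      then have "p = d1 \<or> p = d2 \<or> p = d1 + d2" using p(1) by (auto simp: P_def)
      then show "y \<in> Z d1 \<union> Z d2 \<union> Z (d1 + d2)" using y p(2) by (auto simp: Z_def)
    qed
    then have "card Y \<le> card (Z d1 \<union> Z d2 \<union> Z (d1 + d2))" by (rule card_mono[rotated]) simp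
    also have "\<dots> \<le> card (Z d1) + card (Z d2) + card (Z (d1 + d2))"
      by (meson add_le_mono card_Un_le le_trans order_refl)
    also have "\<dots> \<le> 6" using Zc[OF d1] Zc[OF d2] Zc[OF ne(1)] by (simp add: Z_def)
    finally show False using c10 by simp
  qed
  then obtain t where t: "t \<in> Yo" by auto
  then have "t \<in> Y" "odd (card (Y \<inter> (+) t ` P))" by (auto simp: Yo_def)
  then show False using oddflat[OF P cP _ _ _ small[unfolded Yo_def]] m3 by simp
qed

end

lemma sq_dvd: "(2::int)^(2*k) dvd w^2 \<Longrightarrow> 2^k dvd w"
proof (induction k arbitrary: w)
  case 0 then show ?case by simp
next
  case (Suc k)
  have "(2::int) dvd 2^(2 * Suc k)" by simp
  then have "2 dvd w^2" using Suc.prems dvd_trans by blast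
  then have "even w" by simp
  then obtain w' where w: "w = 2 * w'" by blast
  have "(2::int)^(2 * Suc k) = 4 * 2^(2*k)" by simp
  moreover have "w^2 = 4 * w'^2" using w by (simp add: power2_eq_square)
  ultimately have "4 * 2^(2*k) dvd 4 * (w'^2::int)" using Suc.prems by simp
  then have "2^(2*k) dvd w'^2" by (simp add: dvd_times_left_cancel_iff)
  then have "2^k dvd w'" by (rule Suc.IH)
  then show ?case using w by simp
qed

lemma sum_indic:
  fixes E Y :: "(bit^'n) set"
  shows "(\<Sum>b\<in>E. if b \<in> Y then 0 else c) = c * int (card (E - Y))"
proof -
  have "(\<Sum>b\<in>E. if b \<in> Y then 0 else c) = (\<Sum>b\<in>E. if b \<in> E - Y then c else 0)"
    by (rule sum.cong) auto
  also have "\<dots> = (\<Sum>b\<in>E \<inter> (E - Y). c)" by (subst sum.inter_restrict) simp_all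
  also have "\<dots> = c * int (card (E - Y))" by (simp add: Int_absorb1)
  finally show ?thesis .
qed

theorem mainTheorem16:
  fixes F :: "bit ^ 'n \<Rightarrow> bit ^ 'n"
  assumes "CARD('n) \<ge> 8" and "even CARD('n)"
    and "is_quadratic F" and "is_APN F"
  shows "\<exists>b. b \<noteq> 0 \<and> \<not> is_bent_component F b
             \<and> real_of_int (amplitude F b) < 2 powr (3 * real CARD('n) / 4)"
proof (rule ccontr)
  assume H: "\<not> ?thesis"
  note Q = assms(3) and A = assms(4)
  obtain m where n: "CARD('n) = 2*m" using assms(2) by (auto elim: evenE)
  have m4: "4 \<le> m" using assms(1) n by simp
  define vb where "vb b = card (Vb F b)" for b
  have ampsq: "(amplitude F b)^2 = 2^(2*m) * int (vb b)" for b
    using amp_sq(1)[OF Q, of b] by (simp add: n vb_def)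
  have ampnn: "amplitude F b \<ge> 0" for b using amp_sq(2)[OF Q] .
  have vbpos: "vb b \<ge> 1" for b
  proof -
    have "Vb F b \<noteq> {}" using Vb_0[of F b] by blast
    then show ?thesis by (simp add: vb_def Suc_le_eq card_gt_0_iff)
  qed
  have bent_iff: "is_bent_component F b \<longleftrightarrow> vb b = 1" for b
  proof -
    have "(2::real) powr (real CARD('n) / 2) = 2^m" by (simp add: n powr_realpow)
    then have "is_bent_component F b \<longleftrightarrow> real_of_int (amplitude F b) = real_of_int (2^m)"
      by (simp add: is_bent_component_def)
    also have "\<dots> \<longleftrightarrow> amplitude F b = 2^m" by (rule of_int_eq_iff)
    also have "\<dots> \<longleftrightarrow> (amplitude F b)^2 = (2^m)^2"
      using ampnn[of b] by (simp add: power2_eq_iff_nonneg)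
    also have "\<dots> \<longleftrightarrow> 2^(2*m) * int (vb b) = 2^(2*m)"
      by (simp add: ampsq power_mult[symmetric] mult.commute)
    also have "\<dots> \<longleftrightarrow> vb b = 1" by simp
    finally show ?thesis .
  qed
  have nonbent_big: "2^m \<le> vb b" if b: "b \<noteq> 0" "vb b \<noteq> 1" for b
  proof -
    have nb: "\<not> is_bent_component F b" using b bent_iff by simp
    let ?A = "real_of_int (amplitude F b)"
    let ?p = "(2::real) powr (3 * real CARD('n) / 4)"
    have ge: "?p \<le> ?A" using H b nb by force
    have "?p^2 \<le> ?A^2" using ge by (rule power_mono) simp
    moreover have "?p^2 = 2^(3*m)"
    proof -
      have "?p^2 = ?p * ?p" by (simp add: power2_eq_square)
      also have "\<dots> = 2 powr (3 * real CARD('n) / 4 + 3 * real CARD('n) / 4)" by (simp only: powr_add[symmetric])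
      also have "\<dots> = 2 powr (real (3*m))" by (simp add: n)
      also have "\<dots> = 2^(3*m)" using powr_realpow[of 2 "3*m"] by simp
      finally show ?thesis .
    qed
    moreover have "?A^2 = real_of_int (2^(2*m) * int (vb b))" by (simp add: ampsq[symmetric])
    ultimately have "(2::real)^(3*m) \<le> 2^(2*m) * real (vb b)" by simp
    then have "real ((2::nat)^(3*m)) \<le> real (2^(2*m) * vb b)" by simp
    then have "(2::nat)^(3*m) \<le> 2^(2*m) * vb b" by (simp only: of_nat_le_iff)
    moreover have "(2::nat)^(3*m) = 2^(2*m) * 2^m" by (simp add: power_add[symmetric])
    ultimately show ?thesis by simp
  qed
  define X where "X = {b. b \<noteq> 0 \<and> vb b \<noteq> 1}"
  have inX: "b \<in> X" if "a \<noteq> 0" "a \<in> Vb F b" "b \<noteq> 0" for a b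
  proof -
    have "{0, a} \<subseteq> Vb F b" using that by simp
    then have "card {0, a} \<le> vb b" unfolding vb_def by (rule card_mono[rotated]) simp
    then show ?thesis using that by (simp add: X_def)
  qed
  have disjV: "Vb F b \<inter> Vb F b' = {0}" if "b \<in> X" "b' \<in> X" "b \<noteq> b'" for b b'
  proof (rule ccontr)
    assume "Vb F b \<inter> Vb F b' \<noteq> {0}"
    then obtain a where a: "a \<noteq> 0" "a \<in> Vb F b" "a \<in> Vb F b'" using Vb_0 by blast
    then show False using unique_b[OF Q A a(1)] that by (auto simp: X_def)
  qed
  have prod: "vb b * vb b' \<le> 2^(2*m)" if "b \<in> X" "b' \<in> X" "b \<noteq> b'" for b b'
  proof -
    have inj: "inj_on (\<lambda>(u,v). u + v) (Vb F b \<times> Vb F b')"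
    proof (rule inj_onI, clarsimp)
      fix u v u' v' assume h: "u \<in> Vb F b" "v \<in> Vb F b'" "u' \<in> Vb F b" "v' \<in> Vb F b'" "u + v = u' + v'"
      have "(u + u') + (v + v') = (u + v) + (u' + v')" by (simp add: ac_simps)
      also have "\<dots> = 0" using h(5) by simp
      finally have "u + u' = v + v'" by (simp add: vadd_eq0)
      moreover have "u + u' \<in> Vb F b" "v + v' \<in> Vb F b'"
        using h Vb_subgrp[OF Q] by (auto simp: subgrp_def)
      ultimately have "u + u' = 0" using disjV[OF that] by auto
      then have "u = u'" by (simp add: vadd_eq0)
      then show "u = u' \<and> v = v'" using h(5) by simp
    qed
    have "card (Vb F b \<times> Vb F b') \<le> card (UNIV :: (bit^'n) set)"
      by (rule card_inj_on_le[OF inj]) auto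
    then show ?thesis by (simp add: vb_def card_cartesian_product card_bit n)
  qed
  have count: "(\<Sum>b\<in>X. (vb b - 1)) = 2^(2*m) - 1"
  proof -
    have U: "UNIV - {0} = (\<Union>b\<in>X. Vb F b - {0})"
    proof
      show "UNIV - {0} \<subseteq> (\<Union>b\<in>X. Vb F b - {0})"
      proof
        fix a :: "bit^'n" assume "a \<in> UNIV - {0}"
        then have a: "a \<noteq> 0" by simp
        then obtain b where "b \<noteq> 0" "a \<in> Vb F b" using unique_b[OF Q A a] by blast
        then show "a \<in> (\<Union>b\<in>X. Vb F b - {0})" using inX[OF a] a by blast
      qed
    qed auto
    have "card (UNIV - {0::bit^'n}) = (\<Sum>b\<in>X. card (Vb F b - {0}))"
      unfolding U by (rule card_UN_disjoint) (auto dest: disjV)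
    moreover have "card (UNIV - {0::bit^'n}) = 2^(2*m) - 1" by (simp add: card_bit n)
    moreover have "card (Vb F b - {0}) = vb b - 1" for b by (simp add: vb_def)
    ultimately show ?thesis by simp
  qed
  have "\<exists>b. b \<in> X"
  proof -
    obtain a :: "bit^'n" where "a \<noteq> 0" by (metis vec_eq_iff zero_index zero_neq_one vec_lambda_beta)
    then show ?thesis using unique_b[OF Q A] inX by blast
  qed
  have vals: "\<forall>b\<in>X. vb b = 2^m \<or> vb b = 2^(2*m)" and cX: "card X = 1 \<or> card X = 2^m + 1"
  proof -
    have "(\<forall>b\<in>X. vb b = 2^m \<or> vb b = 2^(2*m)) \<and> (card X = 1 \<or> card X = 2^m + 1)"
    proof (cases "\<exists>b\<in>X. vb b > 2^m")
      case True
      then obtain b where b: "b \<in> X" "vb b > 2^m" by blast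
      have X1: "X = {b}"
      proof (rule ccontr)
        assume "X \<noteq> {b}"
        then obtain b' where b': "b' \<in> X" "b' \<noteq> b" using b(1) by blast
        have "2^m \<le> vb b'" using b' nonbent_big by (auto simp: X_def)
        then have "2^m * 2^m \<le> 2^m * vb b'" by simp
        also have "\<dots> < vb b * vb b'" using b(2) \<open>2^m \<le> vb b'\<close>
          by (intro mult_strict_right_mono) (simp_all add: order_less_le_trans[of 0 "2^m"])
        finally have "2^m * 2^m < vb b * vb b'" .
        moreover have "vb b * vb b' \<le> 2^(2*m)" using prod[OF b(1) b'(1)] b'(2) by simp
        ultimately show False by (simp add: mult_2 power_add)
      qed
      have "vb b - 1 = 2^(2*m) - 1" using count X1 by simp
      then have "vb b = 2^(2*m)" using vbpos[of b] one_le_power[of "2::nat" "2*m"] by linarith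
      then show ?thesis using X1 by simp
    next
      case False
      then have eqm: "\<forall>b\<in>X. vb b = 2^m" using nonbent_big by (force simp: X_def)
      then have "(\<Sum>b\<in>X. (vb b - 1)) = card X * (2^m - 1)" by simp
      then have A: "card X * (2^m - 1) = 2^(2*m) - 1" using count by simp
      have B: "(2::nat)^(2*m) - 1 = (2^m + 1) * (2^m - 1)"
      proof -
        have "(2::nat)^(2*m) = 2^m * 2^m" by (simp add: mult_2 power_add)
        moreover have "(1::nat) \<le> 2^m" by simp
        ultimately show ?thesis by (simp add: algebra_simps diff_mult_distrib2)
      qed
      have pos: "(0::nat) < 2^m - 1"
      proof -
        have "(2::nat)^1 < 2^m" using m4 by (intro power_strict_increasing) auto
        then show ?thesis by simp
      qed
      have eq: "card X * (2^m - 1) = (2^m + 1) * (2^m - 1)" using A B by linarith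
      have "card X = 2^m + 1" using eq pos mult_cancel_right[of "card X" "2^m - 1" "2^m + 1"] by auto
      then show ?thesis using eqm by simp
    qed
    then show "\<forall>b\<in>X. vb b = 2^m \<or> vb b = 2^(2*m)" "card X = 1 \<or> card X = 2^m + 1" by auto
  qed
  define Y where "Y = insert 0 X"
  have cY: "card Y = 2 \<or> card Y = 2^m + 2"
    using cX by (simp add: Y_def X_def)
  have W00: "walsh F 0 0 = 2^(2*m)"
    by (simp add: walsh_def component_def card_bit n)
  have Wbent: "walsh F b 0 = 2^m \<or> walsh F b 0 = - (2^m)" if bv: "b \<noteq> 0" "vb b = 1" for b
  proof -
    obtain x where "Vb F b = {x}" using bv(2) unfolding vb_def by (rule card_1_singletonE)
    then have "Vb F b = {0}" using Vb_0[of F b] by auto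
    then have "(walsh F b 0)^2 = (2^m)^2"
      using walsh_sq[OF Q, of b 0] by (simp add: n power_mult[symmetric] mult.commute)
    then show ?thesis by (simp add: power2_eq_iff)
  qed
  have Wnb: "2^(m+1) dvd walsh F b 0" if "b \<in> X" for b
  proof -
    have "(walsh F b 0)^2 = 0 \<or> (walsh F b 0)^2 = 2^(2*m) * int (vb b)"
      using walsh_sq[OF Q, of b 0] by (simp add: n vb_def split: if_splits)
    moreover have "(2::int)^(2*(m+1)) dvd 2^(2*m) * int (vb b)"
    proof -
      have "vb b = 2^m \<or> vb b = 2^(2*m)" using vals that by blast
      then have "(2::int)^(2*m) * int (vb b) = 2^(3*m) \<or> (2::int)^(2*m) * int (vb b) = 2^(4*m)"
        by (auto simp: power_add[symmetric])
      moreover have "2*(m+1) \<le> 3*m" "2*(m+1) \<le> 4*m" using m4 by auto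
      ultimately show ?thesis using le_imp_power_dvd[of "2*(m+1)" "3*m" "2::int"] le_imp_power_dvd[of "2*(m+1)" "4*m" "2::int"] by auto
    qed
    ultimately have "(2::int)^(2*(m+1)) dvd (walsh F b 0)^2" by auto
    then show ?thesis by (rule sq_dvd)
  qed
  have EV: "even (card (Y \<inter> E))" if E: "subgrp E" "card E = 2^j" "m+1 \<le> j" for E j
  proof -
    let ?S = "\<Sum>b\<in>E. walsh F b 0"
    have "?S = (\<Sum>b\<in>E. \<Sum>x\<in>UNIV. sgn_bit (dotp b (F x)))"
      by (simp add: walsh_def component_def)
    also have "\<dots> = (\<Sum>x\<in>UNIV. \<Sum>b\<in>E. sgn_bit (dotp b (F x)))" by (rule sum.swap)
    also have "\<dots> = (\<Sum>x\<in>UNIV. if \<forall>b\<in>E. dotp b (F x) = 0 then int (card E) else 0)"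
      by (rule sum.cong[OF refl]) (rule char_sum[OF E(1)], simp add: dotp_add_left)
    finally have Seq: "?S = \<dots>" .
    have "(2::int)^j dvd ?S" unfolding Seq using E(2) by (intro dvd_sum) auto
    then have S1: "(2::int)^(m+1) dvd ?S" using le_imp_power_dvd[OF E(3), of "2::int"] by (rule dvd_trans[rotated])
    define r where "r b = walsh F b 0 - (if b \<in> Y then 0 else 2^m)" for b
    have rdvd: "(2::int)^(m+1) dvd r b" if "b \<in> E" for b
    proof (cases "b \<in> Y")
      case True
      show ?thesis
      proof (cases "b = 0")
        case True
        have "(2::int)^(m+1) dvd 2^(2*m)" using m4 by (intro le_imp_power_dvd) simp
        then show ?thesis using True W00 by (simp add: r_def Y_def)
      next
        case False
        then have "b \<in> X" using \<open>b \<in> Y\<close> by (simp add: Y_def)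
        then show ?thesis using Wnb by (simp add: r_def Y_def)
      qed
    next
      case False
      then have b: "b \<noteq> 0" "vb b = 1" by (auto simp: Y_def X_def)
      from Wbent[OF b] show ?thesis
      proof
        assume "walsh F b 0 = 2^m" then show ?thesis using False by (simp add: r_def)
      next
        assume "walsh F b 0 = - (2^m)"
        then have "r b = - (2^(m+1))" using False by (simp add: r_def)
        then show ?thesis by simp
      qed
    qed
    have "?S = (\<Sum>b\<in>E. r b) + (\<Sum>b\<in>E. if b \<in> Y then 0 else 2^m)"
      by (simp add: r_def sum.distrib[symmetric])
    also have "\<dots> = (\<Sum>b\<in>E. r b) + 2^m * int (card (E - Y))" by (simp add: sum_indic)
    finally have S2: "?S = (\<Sum>b\<in>E. r b) + 2^m * int (card (E - Y))" .
    have "(2::int)^(m+1) dvd (\<Sum>b\<in>E. r b)" using rdvd by (intro dvd_sum) auto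
    moreover have "(2::int)^(m+1) dvd (\<Sum>b\<in>E. r b) + 2^m * int (card (E - Y))" using S1 S2 by simp
    ultimately have "(2::int)^(m+1) dvd 2^m * int (card (E - Y))" by (simp add: dvd_add_right_iff)
    then have "(2::int)^m * 2 dvd 2^m * int (card (E - Y))" by (simp add: mult.commute)
    then have "(2::int) dvd int (card (E - Y))" by (simp add: dvd_times_left_cancel_iff)
    then have ev1: "even (card (E - Y))" by simp
    have "even (card E)" using E(2,3) by (simp add: dvd_power)
    moreover have "card E = card (E \<inter> Y) + card (E - Y)"
      using card_Un_disjoint[of "E \<inter> Y" "E - Y"] by (simp add: Int_Diff_Un Int_Diff_disjoint)
    ultimately show ?thesis using ev1 by (simp add: Int_commute)
  qed
  show False
  proof (rule core_false[of m Y])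
    show "CARD('n) = 2*m" by (rule n)
    show "3 \<le> m" using m4 by simp
    show "\<And>E j. subgrp E \<Longrightarrow> card E = 2^j \<Longrightarrow> m+1 \<le> j \<Longrightarrow> even (card (Y \<inter> E))"
      by (rule EV)
    show "card Y = 2 \<or> card Y = 2^m + 2" by (rule cY)
  qed
qed

end
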